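(* Let $a,b\ge0$. If $f_n\to f$ in $\mathcal{A}_a$ and $g_n\to g$ in $\mathcal{A}_b$, then $f_ng_n\to fg$ in $\mathcal{A}_{a+b}$.
   Context: For $b>0$, $\|f\|_b=\sup_{k\in\mathbb{N}_0}b^{-k}|f^{(k)}(0)|$; for $a\ge0$, $\mathcal{A}_a=\{f\text{ entire}:\|f\|_b<\infty\ \forall b>a\}$ with the locally convex topology generated by $\{\|\cdot\|_b:b>a\}$. *)

theory Defs
  imports "HOL-Analysis.Analysis"
begin

definition growth_norm :: "real \<Rightarrow> (complex \<Rightarrow> complex) \<Rightarrow> ereal" where
  "growth_norm b f = (SUP k::nat. ereal (norm ((deriv ^^ k) f 0) / b ^ k))"

definition space_A :: "real \<Rightarrow> (complex \<Rightarrow> complex) set" where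
  "space_A a = {f. f holomorphic_on UNIV \<and> (\<forall>b>a. growth_norm b f < \<infinity>)}"

text \<open>Convergence of a sequence in the locally convex topology of A_a generated by the
  seminorms norm_b (b > a): every term and the limit lie in A_a and each seminorm of the
  difference tends to 0.\<close>
definition converges_in_A :: "real \<Rightarrow> (nat \<Rightarrow> complex \<Rightarrow> complex) \<Rightarrow> (complex \<Rightarrow> complex) \<Rightarrow> bool" where
  "converges_in_A a fs f \<longleftrightarrow>
     (\<forall>n. fs n \<in> space_A a) \<and> f \<in> space_A a \<and>
     (\<forall>b>a. (\<lambda>n. growth_norm b (\<lambda>z. fs n z - f z)) \<longlonglongrightarrow> 0)"

end

theory Submission
  imports Defs "HOL-Complex_Analysis.Complex_Analysis"
begin

lemma gn_le_iff:
  assumes "c > 0"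
  shows "growth_norm c h \<le> ereal M \<longleftrightarrow> (\<forall>k. norm ((deriv ^^ k) h 0) \<le> M * c ^ k)"
proof -
  have "\<And>k. norm ((deriv ^^ k) h 0) / c ^ k \<le> M \<longleftrightarrow> norm ((deriv ^^ k) h 0) \<le> M * c ^ k"
    using assms by (simp add: pos_divide_le_eq)
  then show ?thesis unfolding growth_norm_def by (simp add: SUP_le_iff)
qed

lemma gn_nonneg: "growth_norm c h \<ge> 0"
proof -
  have "ereal (norm ((deriv ^^ 0) h 0) / c ^ 0) \<le> growth_norm c h"
    unfolding growth_norm_def by (rule SUP_upper) auto
  moreover have "ereal (norm ((deriv ^^ 0) h 0) / c ^ 0) \<ge> 0" by simp
  ultimately show ?thesis by (metis order_trans)
qed

lemma gn_bound:
  assumes "c > 0" "growth_norm c h < \<infinity>"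
  shows "\<exists>M\<ge>0. \<forall>k. norm ((deriv ^^ k) h 0) \<le> M * c ^ k"
proof -
  obtain r where r: "growth_norm c h = ereal r"
    using assms(2) gn_nonneg[of c h] by (cases "growth_norm c h") auto
  then have "r \<ge> 0" using gn_nonneg[of c h] by simp
  with r show ?thesis using gn_le_iff[OF assms(1), of h r] by auto
qed

lemma gn_tendsto_iff:
  "(X \<longlonglongrightarrow> 0) \<longleftrightarrow> (\<forall>e>0. eventually (\<lambda>n. growth_norm c (X' n) \<le> ereal e) sequentially)"
  if "X = (\<lambda>n. growth_norm c (X' n))"
proof
  assume "X \<longlonglongrightarrow> 0"
  then show "\<forall>e>0. eventually (\<lambda>n. growth_norm c (X' n) \<le> ereal e) sequentially"
    unfolding that order_tendsto_iff
    by (metis (mono_tags, lifting) eventually_mono less_imp_le zero_ereal_def ereal_less(2))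
next
  assume H: "\<forall>e>0. eventually (\<lambda>n. growth_norm c (X' n) \<le> ereal e) sequentially"
  show "X \<longlonglongrightarrow> 0" unfolding that order_tendsto_iff
  proof safe
    fix a :: ereal assume "a < 0"
    then show "eventually (\<lambda>n. a < growth_norm c (X' n)) sequentially"
      using gn_nonneg by (metis always_eventually order_less_le_trans)
  next
    fix a :: ereal assume a: "0 < a"
    show "eventually (\<lambda>n. growth_norm c (X' n) < a) sequentially"
    proof (cases a)
      case (real r)
      with a have "r / 2 > 0" by simp
      with H have "eventually (\<lambda>n. growth_norm c (X' n) \<le> ereal (r/2)) sequentially" by blast
      moreover have "ereal (r/2) < a" using real \<open>r/2>0\<close> by simp
      ultimately show ?thesis
        by (elim eventually_mono) (metis order_le_less_trans)
    next
      case PInf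
      from H have "eventually (\<lambda>n. growth_norm c (X' n) \<le> ereal 1) sequentially" by simp
      then show ?thesis by (rule eventually_mono) (use PInf in auto)
    qed (use a in auto)
  qed
qed

lemma gn_tendstoD:
  assumes "(\<lambda>n. growth_norm c (X' n)) \<longlonglongrightarrow> 0" "e > 0"
  shows "eventually (\<lambda>n. growth_norm c (X' n) \<le> ereal e) sequentially"
  using gn_tendsto_iff[OF refl, of c X'] assms by blast

lemma prod_bound:
  fixes u v :: "complex \<Rightarrow> complex"
  assumes "u holomorphic_on UNIV" "v holomorphic_on UNIV" "c1 \<ge> 0" "c2 \<ge> 0"
    and U: "\<And>j. norm ((deriv ^^ j) u 0) \<le> U * c1 ^ j"
    and V: "\<And>j. norm ((deriv ^^ j) v 0) \<le> V * c2 ^ j"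
  shows "norm ((deriv ^^ k) (\<lambda>z. u z * v z) 0) \<le> U * V * (c1 + c2) ^ k"
proof -
  have U0: "U \<ge> 0" using U[of 0] by simp (meson norm_ge_zero order_trans)
  have V0: "V \<ge> 0" using V[of 0] by simp (meson norm_ge_zero order_trans)
  have eq: "(deriv ^^ k) (\<lambda>z. u z * v z) 0 =
     (\<Sum>i = 0..k. of_nat (k choose i) * (deriv ^^ i) u 0 * (deriv ^^ (k-i)) v 0)"
    by (rule higher_deriv_mult[OF assms(1,2)]) auto
  have "norm ((deriv ^^ k) (\<lambda>z. u z * v z) 0) \<le> (\<Sum>i = 0..k. norm (of_nat (k choose i) * (deriv ^^ i) u 0 * (deriv ^^ (k-i)) v 0))"
    unfolding eq by (rule norm_sum)
  also have "\<dots> \<le> (\<Sum>i = 0..k. real (k choose i) * (U * c1 ^ i) * (V * c2 ^ (k - i)))"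
  proof (rule sum_mono)
    fix i assume "i \<in> {0..k}"
    have "norm (of_nat (k choose i) * (deriv ^^ i) u 0 * (deriv ^^ (k-i)) v 0)
        = real (k choose i) * norm ((deriv ^^ i) u 0) * norm ((deriv ^^ (k-i)) v 0)"
      by (simp add: norm_mult)
    also have "\<dots> \<le> real (k choose i) * (U * c1 ^ i) * (V * c2 ^ (k - i))"
    proof -
      have "norm ((deriv ^^ i) u 0) * norm ((deriv ^^ (k-i)) v 0) \<le> (U * c1 ^ i) * (V * c2 ^ (k - i))"
        by (rule mult_mono[OF U V]) (use U0 assms(3) in auto)
      then have "real (k choose i) * (norm ((deriv ^^ i) u 0) * norm ((deriv ^^ (k-i)) v 0))
          \<le> real (k choose i) * ((U * c1 ^ i) * (V * c2 ^ (k - i)))"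
        by (rule mult_left_mono) simp
      then show ?thesis by (simp only: mult.assoc)
    qed
    finally show "norm (of_nat (k choose i) * (deriv ^^ i) u 0 * (deriv ^^ (k-i)) v 0)
        \<le> real (k choose i) * (U * c1 ^ i) * (V * c2 ^ (k - i))" .
  qed
  also have "\<dots> = U * V * (\<Sum>i = 0..k. real (k choose i) * c1 ^ i * c2 ^ (k - i))"
    by (simp add: sum_distrib_left mult_ac)
  also have "\<dots> = U * V * (c1 + c2) ^ k"
    by (simp add: binomial_ring atLeast0AtMost)
  finally show ?thesis .
qed

lemma A_bound:
  assumes "u \<in> space_A a" "a \<ge> 0" "c > a"
  shows "\<exists>M\<ge>0. \<forall>k. norm ((deriv ^^ k) u 0) \<le> M * c ^ k"
  using assms gn_bound[of c u] unfolding space_A_def by auto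

lemma A_prod:
  assumes "u \<in> space_A a" "v \<in> space_A b" "a \<ge> 0" "b \<ge> 0"
  shows "(\<lambda>z. u z * v z) \<in> space_A (a + b)"
proof -
  have hu: "u holomorphic_on UNIV" and hv: "v holomorphic_on UNIV"
    using assms unfolding space_A_def by auto
  have "growth_norm c (\<lambda>z. u z * v z) < \<infinity>" if c: "c > a + b" for c
  proof -
    define d where "d = (c - a - b) / 2"
    have d: "d > 0" using c by (simp add: d_def)
    obtain M1 where M1: "\<And>k. norm ((deriv ^^ k) u 0) \<le> M1 * (a + d) ^ k"
      using A_bound[OF assms(1) assms(3), of "a+d"] d by auto
    obtain M2 where M2: "\<And>k. norm ((deriv ^^ k) v 0) \<le> M2 * (b + d) ^ k"
      using A_bound[OF assms(2) assms(4), of "b+d"] d by auto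
    have "\<forall>k. norm ((deriv ^^ k) (\<lambda>z. u z * v z) 0) \<le> (M1 * M2) * c ^ k"
      using prod_bound[OF hu hv _ _ M1 M2] d assms(3,4) by (simp add: d_def)
    then have "growth_norm c (\<lambda>z. u z * v z) \<le> ereal (M1 * M2)"
      using gn_le_iff[of c] c assms(3,4) by simp
    then show ?thesis by (rule order.strict_trans1) simp
  qed
  then show ?thesis unfolding space_A_def using holomorphic_on_mult[OF hu hv] by auto
qed

theorem corollary1p3:
  fixes a b :: real
    and fs gs :: "nat \<Rightarrow> complex \<Rightarrow> complex"
    and f g :: "complex \<Rightarrow> complex"
  assumes "a \<ge> 0" and "b \<ge> 0"
    and "converges_in_A a fs f"
    and "converges_in_A b gs g"
  shows "converges_in_A (a + b) (\<lambda>n z. fs n z * gs n z) (\<lambda>z. f z * g z)"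
proof -
  have fsA: "\<And>n. fs n \<in> space_A a" and fA: "f \<in> space_A a"
    and fconv: "\<And>c. c > a \<Longrightarrow> (\<lambda>n. growth_norm c (\<lambda>z. fs n z - f z)) \<longlonglongrightarrow> 0"
    using assms(3) unfolding converges_in_A_def by auto
  have gsA: "\<And>n. gs n \<in> space_A b" and gA: "g \<in> space_A b"
    and gconv: "\<And>c. c > b \<Longrightarrow> (\<lambda>n. growth_norm c (\<lambda>z. gs n z - g z)) \<longlonglongrightarrow> 0"
    using assms(4) unfolding converges_in_A_def by auto
  have hfs: "\<And>n. fs n holomorphic_on UNIV" and hf: "f holomorphic_on UNIV"
    and hgs: "\<And>n. gs n holomorphic_on UNIV" and hg: "g holomorphic_on UNIV"
    using fsA fA gsA gA unfolding space_A_def by auto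
  have conv: "(\<lambda>n. growth_norm c (\<lambda>z. fs n z * gs n z - f z * g z)) \<longlonglongrightarrow> 0"
    if c: "c > a + b" for c
  proof -
    define d where "d = (c - a - b) / 2"
    have d: "d > 0" using c by (simp add: d_def)
    define c1 where "c1 = a + d"
    define c2 where "c2 = b + d"
    have c1: "c1 > a" "c1 > 0" and c2: "c2 > b" "c2 > 0"
      using d assms(1,2) unfolding c1_def c2_def d_def by linarith+
    have c12: "c1 + c2 = c" unfolding c1_def c2_def d_def by (simp add: field_simps)
    obtain F where F0: "F \<ge> 0" and F: "\<And>k. norm ((deriv ^^ k) f 0) \<le> F * c1 ^ k"
      using A_bound[OF fA assms(1) c1(1)] by auto
    obtain G where G0: "G \<ge> 0" and G: "\<And>k. norm ((deriv ^^ k) g 0) \<le> G * c2 ^ k"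
      using A_bound[OF gA assms(2) c2(1)] by auto
    show ?thesis
    proof (subst gn_tendsto_iff[OF refl], intro allI impI)
      fix e :: real assume e: "e > 0"
      define \<delta> where "\<delta> = min 1 (e / (1 + F + G))"
      have \<delta>0: "\<delta> > 0" using e F0 G0 by (simp add: \<delta>_def)
      have \<delta>1: "\<delta> \<le> 1" by (simp add: \<delta>_def)
      have \<delta>e: "\<delta> * (1 + F + G) \<le> e"
      proof -
        have "\<delta> \<le> e / (1 + F + G)" by (simp add: \<delta>_def)
        then have "\<delta> * (1 + F + G) \<le> e / (1 + F + G) * (1 + F + G)"
          by (rule mult_right_mono) (use F0 G0 in auto)
        also have "\<dots> = e" using F0 G0 by simp
        finally show ?thesis .
      qed
      have ev1: "eventually (\<lambda>n. growth_norm c1 (\<lambda>z. fs n z - f z) \<le> ereal \<delta>) sequentially"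
        by (rule gn_tendstoD[of c1 "\<lambda>n z. fs n z - f z", OF fconv[OF c1(1)] \<delta>0])
      have ev2: "eventually (\<lambda>n. growth_norm c2 (\<lambda>z. gs n z - g z) \<le> ereal \<delta>) sequentially"
        by (rule gn_tendstoD[of c2 "\<lambda>n z. gs n z - g z", OF gconv[OF c2(1)] \<delta>0])
      show "eventually (\<lambda>n. growth_norm c (\<lambda>z. fs n z * gs n z - f z * g z) \<le> ereal e) sequentially"
        using ev1 ev2
      proof eventually_elim
        case (elim n)
        have B1: "\<And>k. norm ((deriv ^^ k) (\<lambda>z. fs n z - f z) 0) \<le> \<delta> * c1 ^ k"
          using elim(1) gn_le_iff[OF c1(2)] by blast
        have B2: "\<And>k. norm ((deriv ^^ k) (\<lambda>z. gs n z - g z) 0) \<le> \<delta> * c2 ^ k"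
          using elim(2) gn_le_iff[OF c2(2)] by blast
        have hd1: "(\<lambda>z. fs n z - f z) holomorphic_on UNIV"
          using hfs hf by (intro holomorphic_intros) auto
        have hd2: "(\<lambda>z. gs n z - g z) holomorphic_on UNIV"
          using hgs hg by (intro holomorphic_intros) auto
        have B3: "norm ((deriv ^^ k) (gs n) 0) \<le> (\<delta> + G) * c2 ^ k" for k
        proof -
          have "(deriv ^^ k) (\<lambda>z. (gs n z - g z) + g z) 0
               = (deriv ^^ k) (\<lambda>z. gs n z - g z) 0 + (deriv ^^ k) g 0"
            by (rule higher_deriv_add[OF hd2 hg]) auto
          moreover have "(\<lambda>z. (gs n z - g z) + g z) = gs n" by auto
          ultimately have "(deriv ^^ k) (gs n) 0
               = (deriv ^^ k) (\<lambda>z. gs n z - g z) 0 + (deriv ^^ k) g 0" by simp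
          then have "norm ((deriv ^^ k) (gs n) 0) \<le> norm ((deriv ^^ k) (\<lambda>z. gs n z - g z) 0) + norm ((deriv ^^ k) g 0)"
            by (metis norm_triangle_ineq)
          also have "\<dots> \<le> \<delta> * c2 ^ k + G * c2 ^ k" using B2 G by (rule add_mono)
          finally show ?thesis by (simp add: algebra_simps)
        qed
        have P1: "norm ((deriv ^^ k) (\<lambda>z. (fs n z - f z) * gs n z) 0) \<le> \<delta> * (\<delta> + G) * c ^ k" for k
          unfolding c12[symmetric] by (rule prod_bound[OF hd1 hgs[of n] _ _ B1 B3]) (use c1 c2 in linarith)+
        have P2: "norm ((deriv ^^ k) (\<lambda>z. f z * (gs n z - g z)) 0) \<le> F * \<delta> * c ^ k" for k
          unfolding c12[symmetric] by (rule prod_bound[OF hf hd2 _ _ F B2]) (use c1 c2 in linarith)+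
        have cpos: "c > 0" using c1 c2 c12 by linarith
        have Bk: "norm ((deriv ^^ k) (\<lambda>z. fs n z * gs n z - f z * g z) 0) \<le> e * c ^ k" for k
        proof -
          have eq: "(\<lambda>z. fs n z * gs n z - f z * g z) = (\<lambda>z. (fs n z - f z) * gs n z + f z * (gs n z - g z))"
            by (auto simp: algebra_simps)
          have dsum: "(deriv ^^ k) (\<lambda>z. (fs n z - f z) * gs n z + f z * (gs n z - g z)) 0
             = (deriv ^^ k) (\<lambda>z. (fs n z - f z) * gs n z) 0 + (deriv ^^ k) (\<lambda>z. f z * (gs n z - g z)) 0"
            by (rule higher_deriv_add[where S=UNIV]) (use hd1 hd2 hf hgs in \<open>auto intro!: holomorphic_on_mult\<close>)
          have "norm ((deriv ^^ k) (\<lambda>z. fs n z * gs n z - f z * g z) 0)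
              \<le> norm ((deriv ^^ k) (\<lambda>z. (fs n z - f z) * gs n z) 0) + norm ((deriv ^^ k) (\<lambda>z. f z * (gs n z - g z)) 0)"
            unfolding eq dsum by (rule norm_triangle_ineq)
          also have "\<dots> \<le> \<delta> * (\<delta> + G) * c ^ k + F * \<delta> * c ^ k" using P1 P2 by (rule add_mono)
          also have "\<dots> = (\<delta> * (\<delta> + G + F)) * c ^ k" by (simp add: algebra_simps)
          also have "\<dots> \<le> e * c ^ k"
          proof (rule mult_right_mono)
            have "\<delta> * (\<delta> + G + F) \<le> \<delta> * (1 + F + G)"
              using \<delta>0 \<delta>1 by (intro mult_left_mono) auto
            then show "\<delta> * (\<delta> + G + F) \<le> e" using \<delta>e by linarith
          qed (use cpos in simp)
          finally show ?thesis .
        qed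
        show ?case by (simp only: gn_le_iff[OF cpos]) (intro allI Bk)
      qed
    qed
  qed
  show ?thesis unfolding converges_in_A_def
  proof (intro conjI allI impI)
    fix n show "(\<lambda>z. fs n z * gs n z) \<in> space_A (a + b)" by (rule A_prod[OF fsA gsA assms(1,2)])
  next
    show "(\<lambda>z. f z * g z) \<in> space_A (a + b)" by (rule A_prod[OF fA gA assms(1,2)])
  next
    fix c :: real assume "a + b < c"
    then show "(\<lambda>n. growth_norm c (\<lambda>z. fs n z * gs n z - f z * g z)) \<longlonglongrightarrow> 0" by (rule conv)
  qed
qed

end
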